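(* Let $p\ge0$ be a fixed integer. Let $V:S^1\to\mathbb{R}$ be of class $C^{k-1,1}(S^1)$ with $k\ge 2p+1$, let $\phi(\theta)=e^{-V(\theta)}$, and let $\pi_n$ be the monic degree-$n$ orthogonal polynomial with respect to $\phi$ on the unit circle. Then \[ \lim_{n\to\infty}\frac{1}{n^p}\cdot\frac{\|\pi_n^{(p)}\|_\phi}{\|\pi_n\|_\phi}=1. \]
   Context: $C^{k-1,1}(S^1)$ denotes functions on the circle whose $2\pi$-periodic extension has $k-1$ Lipschitz continuous derivatives. The inner product is $\langle f,g\rangle_\phi=\frac{1}{2\pi}\int_{-\pi}^{\pi}f(e^{i\theta})\overline{g(e^{i\theta})}\phi(\theta)\,d\theta$, $\|f\|_\phi=\langle f,f\rangle_\phi^{1/2}$, and $\pi_n$ is the monic degree-$n$ polynomial orthogonal to all polynomials of lower degree; $\pi_n^{(p)}$ is its $p$-th derivative. *)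

theory Defs
  imports "HOL-Analysis.Analysis" "HOL-Computational_Algebra.Polynomial"
begin

text \<open>A function on the circle is represented by its 2pi-periodic extension to the real line.
  Class C^{k-1,1}: periodic, k-1 times differentiable, with Lipschitz (k-1)-th derivative.\<close>
definition C_lip_periodic :: "nat \<Rightarrow> (real \<Rightarrow> real) \<Rightarrow> bool" where
  "C_lip_periodic k V \<longleftrightarrow>
     (\<forall>\<theta>. V (\<theta> + 2 * pi) = V \<theta>) \<and>
     (\<exists>D :: nat \<Rightarrow> real \<Rightarrow> real. D 0 = V \<and>
        (\<forall>j < k - 1. \<forall>x. (D j has_real_derivative D (Suc j) x) (at x)) \<and>
        (\<exists>L. \<forall>x y. \<bar>D (k - 1) x - D (k - 1) y\<bar> \<le> L * \<bar>x - y\<bar>))"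

definition ip_phi :: "(real \<Rightarrow> real) \<Rightarrow> complex poly \<Rightarrow> complex poly \<Rightarrow> complex" where
  "ip_phi \<phi> f g = integral {-pi..pi}
      (\<lambda>\<theta>. poly f (cis \<theta>) * cnj (poly g (cis \<theta>)) * complex_of_real (\<phi> \<theta>)) / (2 * pi)"

definition norm_phi :: "(real \<Rightarrow> real) \<Rightarrow> complex poly \<Rightarrow> real" where
  "norm_phi \<phi> f = sqrt (Re (ip_phi \<phi> f f))"

definition OPUC :: "(real \<Rightarrow> real) \<Rightarrow> nat \<Rightarrow> complex poly" where
  "OPUC \<phi> n = (THE P. degree P = n \<and> lead_coeff P = 1 \<and>
                      (\<forall>q. degree q < n \<longrightarrow> ip_phi \<phi> P q = 0))"

end

theory Submission
  imports Defs
begin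

lemma cont_poly_cis[continuous_intros]: "continuous_on S (\<lambda>\<theta>. poly f (cis \<theta>))"
  by (intro continuous_intros)

definition igd :: "(real \<Rightarrow> real) \<Rightarrow> complex poly \<Rightarrow> complex poly \<Rightarrow> real \<Rightarrow> complex" where
  "igd \<phi> f g \<theta> = poly f (cis \<theta>) * cnj (poly g (cis \<theta>)) * complex_of_real (\<phi> \<theta>)"

lemma ip_igd: "ip_phi \<phi> f g = integral {-pi..pi} (igd \<phi> f g) / (2 * pi)"
  unfolding ip_phi_def igd_def by simp

lemma ip_integrable:
  assumes "continuous_on {-pi..pi} \<phi>"
  shows "igd \<phi> f g integrable_on {-pi..pi}"
  unfolding igd_def
  by (intro integrable_continuous_interval continuous_intros assms continuous_on_of_real)

context
  fixes \<phi> :: "real \<Rightarrow> real"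
  assumes phic: "continuous_on {-pi..pi} \<phi>"
begin

lemma ip_add_left: "ip_phi \<phi> (f + g) h = ip_phi \<phi> f h + ip_phi \<phi> g h"
proof -
  have "igd \<phi> (f + g) h = (\<lambda>x. igd \<phi> f h x + igd \<phi> g h x)"
    by (auto simp: igd_def algebra_simps fun_eq_iff)
  then show ?thesis unfolding ip_igd
    by (simp add: integral_add ip_integrable[OF phic] add_divide_distrib)
qed

lemma ip_add_right: "ip_phi \<phi> h (f + g) = ip_phi \<phi> h f + ip_phi \<phi> h g"
proof -
  have "igd \<phi> h (f + g) = (\<lambda>x. igd \<phi> h f x + igd \<phi> h g x)"
    by (auto simp: igd_def algebra_simps fun_eq_iff)
  then show ?thesis unfolding ip_igd
    by (simp add: integral_add ip_integrable[OF phic] add_divide_distrib)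
qed

lemma ip_smult_left: "ip_phi \<phi> (smult c f) h = c * ip_phi \<phi> f h"
proof -
  have "igd \<phi> (smult c f) h = (\<lambda>x. c * igd \<phi> f h x)"
    by (auto simp: igd_def algebra_simps fun_eq_iff)
  then show ?thesis unfolding ip_igd
    by (simp add: integral_mult_right)
qed

lemma ip_smult_right: "ip_phi \<phi> h (smult c f) = cnj c * ip_phi \<phi> h f"
proof -
  have "igd \<phi> h (smult c f) = (\<lambda>x. cnj c * igd \<phi> h f x)"
    by (auto simp: igd_def algebra_simps fun_eq_iff)
  then show ?thesis unfolding ip_igd
    by (simp add: integral_mult_right)
qed

lemma ip_cnj: "ip_phi \<phi> g f = cnj (ip_phi \<phi> f g)"
proof -
  have "igd \<phi> g f = (\<lambda>x. cnj (igd \<phi> f g x))"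
    by (auto simp: igd_def algebra_simps fun_eq_iff)
  then show ?thesis unfolding ip_igd
    by (simp add: integral_cnj)
qed

lemma ip_zero_left[simp]: "ip_phi \<phi> 0 h = 0"
  using ip_smult_left[of 0 0 h] by simp

lemma ip_zero_right[simp]: "ip_phi \<phi> h 0 = 0"
  using ip_smult_right[of h 0 0] by simp

lemma ip_minus_left: "ip_phi \<phi> (- f) h = - ip_phi \<phi> f h"
  using ip_smult_left[of "-1" f h] by simp

lemma ip_minus_right: "ip_phi \<phi> h (- f) = - ip_phi \<phi> h f"
  using ip_smult_right[of h "-1" f] by simp

lemma ip_diff_left: "ip_phi \<phi> (f - g) h = ip_phi \<phi> f h - ip_phi \<phi> g h"
  using ip_add_left[of f "-g" h] ip_minus_left[of g h] by simp

lemma ip_diff_right: "ip_phi \<phi> h (f - g) = ip_phi \<phi> h f - ip_phi \<phi> h g"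
  using ip_add_right[of h f "-g"] ip_minus_right[of h g] by simp

lemma ip_sum_left: "ip_phi \<phi> (\<Sum>i\<in>A. f i) h = (\<Sum>i\<in>A. ip_phi \<phi> (f i) h)"
  by (induction A rule: infinite_finite_induct) (auto simp: ip_add_left)

lemma ip_sum_right: "ip_phi \<phi> h (\<Sum>i\<in>A. f i) = (\<Sum>i\<in>A. ip_phi \<phi> h (f i))"
  by (induction A rule: infinite_finite_induct) (auto simp: ip_add_right)

lemma ip_self: "ip_phi \<phi> f f = complex_of_real
   (integral {-pi..pi} (\<lambda>\<theta>. (cmod (poly f (cis \<theta>)))\<^sup>2 * \<phi> \<theta>) / (2 * pi))"
proof -
  have e: "igd \<phi> f f = (\<lambda>x. complex_of_real ((cmod (poly f (cis x)))\<^sup>2 * \<phi> x))"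
    unfolding igd_def fun_eq_iff of_real_mult complex_norm_square[symmetric] by simp
  have "(\<lambda>\<theta>. (cmod (poly f (cis \<theta>)))\<^sup>2 * \<phi> \<theta>) integrable_on {-pi..pi}"
    by (intro integrable_continuous_interval continuous_intros phic)
  from has_integral_of_real[OF integrable_integral[OF this], where 'b=complex]
  have "integral {-pi..pi} (igd \<phi> f f) = complex_of_real (integral {-pi..pi} (\<lambda>\<theta>. (cmod (poly f (cis \<theta>)))\<^sup>2 * \<phi> \<theta>))"
    unfolding e by (rule integral_unique)
  then show ?thesis unfolding ip_igd by simp
qed

lemma ip_self_real: "ip_phi \<phi> f f = complex_of_real (Re (ip_phi \<phi> f f))"
  by (metis ip_self Re_complex_of_real)

end

definition Rn :: "(real \<Rightarrow> real) \<Rightarrow> complex poly \<Rightarrow> real" where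
  "Rn \<phi> f = Re (ip_phi \<phi> f f)"

lemma inj_on_cis: "inj_on cis {-pi<..pi}"
  by (metis Arg_cis inj_onI)

context
  fixes \<phi> :: "real \<Rightarrow> real"
  assumes phic: "continuous_on {-pi..pi} \<phi>"
    and phipos: "\<And>\<theta>. \<theta> \<in> {-pi..pi} \<Longrightarrow> \<phi> \<theta> > 0"
begin

lemma Rn_eq: "Rn \<phi> f = integral {-pi..pi} (\<lambda>\<theta>. (cmod (poly f (cis \<theta>)))\<^sup>2 * \<phi> \<theta>) / (2 * pi)"
  unfolding Rn_def by (subst ip_self[OF phic], simp)

lemma Rn_nonneg: "Rn \<phi> f \<ge> 0"
  unfolding Rn_eq
  by (intro divide_nonneg_pos integral_nonneg integrable_continuous_interval continuous_intros phic)
     (auto intro!: mult_nonneg_nonneg less_imp_le[OF phipos])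

lemma Rn_pos:
  assumes "f \<noteq> 0"
  shows "Rn \<phi> f > 0"
proof (rule ccontr)
  assume "\<not> Rn \<phi> f > 0"
  with Rn_nonneg have "Rn \<phi> f = 0" by (simp add: not_less antisym)
  hence i0: "integral {-pi..pi} (\<lambda>\<theta>. (cmod (poly f (cis \<theta>)))\<^sup>2 * \<phi> \<theta>) = 0"
    unfolding Rn_eq by simp
  have "\<forall>x\<in>{-pi..pi}. (cmod (poly f (cis x)))\<^sup>2 * \<phi> x = 0"
  proof (rule iffD1[OF integral_eq_0_iff i0])
    show "continuous_on {- pi..pi} (\<lambda>\<theta>. (cmod (poly f (cis \<theta>)))\<^sup>2 * \<phi> \<theta>)"
      by (intro continuous_intros phic)
  qed (auto intro!: mult_nonneg_nonneg less_imp_le[OF phipos])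
  hence z: "\<And>x. x \<in> {-pi<..pi} \<Longrightarrow> poly f (cis x) = 0"
  proof -
    fix x assume "x \<in> {-pi<..pi}" "\<forall>x\<in>{-pi..pi}. (cmod (poly f (cis x)))\<^sup>2 * \<phi> x = 0"
    moreover then have "\<phi> x > 0" using phipos by auto
    ultimately show "poly f (cis x) = 0" by auto
  qed
  have "cis ` {-pi<..pi} \<subseteq> {x. poly f x = 0}" using z by auto
  hence "finite (cis ` {-pi<..pi})"
    using poly_roots_finite[OF assms] finite_subset by blast
  hence "finite {-pi<..pi}" using finite_imageD inj_on_cis by blast
  moreover have "infinite {-pi<..pi}" using pi_gt_zero by simp
  ultimately show False by simp
qed

lemma Rn_zero_iff: "Rn \<phi> f = 0 \<longleftrightarrow> f = 0"
proof
  assume "Rn \<phi> f = 0" then show "f = 0" using Rn_pos[of f] by (cases "f = 0") auto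
qed (simp add: Rn_def ip_zero_left[OF phic])

lemma ip_self_Rn: "ip_phi \<phi> f f = complex_of_real (Rn \<phi> f)"
  unfolding Rn_def by (rule ip_self_real[OF phic])

lemma Re_ip_sym: "Re (ip_phi \<phi> g f) = Re (ip_phi \<phi> f g)"
  by (subst ip_cnj[OF phic]) simp

lemma Rn_add: "Rn \<phi> (f + g) = Rn \<phi> f + 2 * Re (ip_phi \<phi> f g) + Rn \<phi> g"
  unfolding Rn_def using Re_ip_sym[of f g]
  by (simp add: ip_add_left[OF phic] ip_add_right[OF phic])

lemma Rn_smult: "Rn \<phi> (smult c f) = (cmod c)\<^sup>2 * Rn \<phi> f"
proof -
  have "ip_phi \<phi> (smult c f) (smult c f) = (c * cnj c) * ip_phi \<phi> f f"
    by (simp add: ip_smult_left[OF phic] ip_smult_right[OF phic])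
  also have "\<dots> = complex_of_real ((cmod c)\<^sup>2 * Rn \<phi> f)"
    by (simp add: complex_norm_square[symmetric] ip_self_Rn)
  finally show ?thesis unfolding Rn_def[of _ "smult c f"] by simp
qed

lemma Rn_minus: "Rn \<phi> (- f) = Rn \<phi> f"
  using Rn_smult[of "-1" f] by simp

lemma CS: "Re (ip_phi \<phi> f g) \<le> sqrt (Rn \<phi> f) * sqrt (Rn \<phi> g)"
proof (cases "f = 0 \<or> g = 0")
  case True
  then show ?thesis using Rn_nonneg[of f] Rn_nonneg[of g]
    by (auto simp: ip_zero_left[OF phic] ip_zero_right[OF phic])
next
  case False
  define a where "a = Rn \<phi> f"
  define b where "b = Rn \<phi> g"
  have a: "a > 0" "b > 0" using False Rn_pos unfolding a_def b_def by auto
  define t where "t = sqrt b / sqrt a"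
  have t: "t > 0" using a unfolding t_def by simp
  have "0 \<le> Rn \<phi> (smult (complex_of_real t) f + - g)" by (rule Rn_nonneg)
  also have "\<dots> = t\<^sup>2 * a - 2 * t * Re (ip_phi \<phi> f g) + b"
    unfolding Rn_add Rn_smult Rn_minus a_def b_def
    by (simp add: ip_minus_right[OF phic] ip_smult_left[OF phic])
  also have "t\<^sup>2 * a = b" using a unfolding t_def by (simp add: power_divide)
  finally have "2 * t * Re (ip_phi \<phi> f g) \<le> 2 * b" by simp
  hence "Re (ip_phi \<phi> f g) \<le> b / t" using t by (simp add: field_simps)
  also have "b / t = sqrt a * sqrt b"
  proof -
    have "b = sqrt b * sqrt b" using a by simp
    then show ?thesis using a unfolding t_def by (simp add: field_simps)
  qed
  finally show ?thesis unfolding a_def b_def .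
qed

lemma N_def': "norm_phi \<phi> f = sqrt (Rn \<phi> f)"
  unfolding norm_phi_def Rn_def ..

lemma N_nonneg: "norm_phi \<phi> f \<ge> 0"
  unfolding N_def' using Rn_nonneg by simp

lemma N_triangle: "norm_phi \<phi> (f + g) \<le> norm_phi \<phi> f + norm_phi \<phi> g"
proof -
  have "Rn \<phi> (f + g) \<le> (sqrt (Rn \<phi> f) + sqrt (Rn \<phi> g))\<^sup>2"
    using CS[of f g] Rn_nonneg[of f] Rn_nonneg[of g]
    by (simp add: Rn_add power2_sum)
  hence "sqrt (Rn \<phi> (f + g)) \<le> sqrt ((sqrt (Rn \<phi> f) + sqrt (Rn \<phi> g))\<^sup>2)"
    by (rule real_sqrt_le_mono)
  also have "\<dots> = sqrt (Rn \<phi> f) + sqrt (Rn \<phi> g)"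
    using Rn_nonneg[of f] Rn_nonneg[of g] by simp
  finally show ?thesis unfolding N_def' .
qed

lemma N_smult: "norm_phi \<phi> (smult c f) = cmod c * norm_phi \<phi> f"
  unfolding N_def' Rn_smult by (simp add: real_sqrt_mult)

lemma N_minus: "norm_phi \<phi> (- f) = norm_phi \<phi> f"
  unfolding N_def' Rn_minus ..

lemma N_diff: "norm_phi \<phi> (f - g) \<le> norm_phi \<phi> f + norm_phi \<phi> g"
  using N_triangle[of f "-g"] N_minus[of g] by simp

lemma N_rev: "\<bar>norm_phi \<phi> f - norm_phi \<phi> g\<bar> \<le> norm_phi \<phi> (f - g)"
proof -
  have "norm_phi \<phi> f \<le> norm_phi \<phi> (f - g) + norm_phi \<phi> g"
    using N_triangle[of "f - g" g] by simp
  moreover have "norm_phi \<phi> g \<le> norm_phi \<phi> (f - g) + norm_phi \<phi> f"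
    using N_triangle[of "g - f" f] N_minus[of "f - g"] by simp
  ultimately show ?thesis by linarith
qed

end

definition orth :: "(real \<Rightarrow> real) \<Rightarrow> nat \<Rightarrow> complex poly \<Rightarrow> bool" where
  "orth \<phi> n P \<longleftrightarrow> degree P = n \<and> lead_coeff P = 1 \<and> (\<forall>q. degree q < n \<longrightarrow> ip_phi \<phi> P q = 0)"

lemma degree_lt_aux:
  fixes d :: "complex poly"
  assumes "degree d \<le> n" "coeff d n = 0" "0 < n"
  shows "degree d < n"
proof (cases "d = 0")
  case False
  then have "degree d \<noteq> n" using assms(2) by auto
  then show ?thesis using assms(1) by simp
qed (use assms in simp)

context
  fixes \<phi> :: "real \<Rightarrow> real"
  assumes phic: "continuous_on {-pi..pi} \<phi>"
    and phipos: "\<And>\<theta>. \<theta> \<in> {-pi..pi} \<Longrightarrow> \<phi> \<theta> > 0"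
begin

lemma orth_unique:
  assumes "orth \<phi> n P" "orth \<phi> n Q"
  shows "P = Q"
proof (cases "n = 0")
  case True
  then show ?thesis using assms unfolding orth_def
    by (metis degree_0_id)
next
  case False
  define d where "d = P - Q"
  have "degree d \<le> n" using assms degree_diff_le[of P n Q] unfolding orth_def d_def
    by simp
  moreover have "coeff d n = 0"
  proof -
    have "degree P = n" "lead_coeff P = 1" "degree Q = n" "lead_coeff Q = 1"
      using assms unfolding orth_def by auto
    then have "coeff P n = 1" "coeff Q n = 1" by auto
    then show ?thesis unfolding d_def by simp
  qed
  ultimately have dn: "degree d < n" using False degree_lt_aux by auto
  have "ip_phi \<phi> d d = ip_phi \<phi> P d - ip_phi \<phi> Q d"
    unfolding d_def by (rule ip_diff_left[OF phic])
  also have "\<dots> = 0" using assms dn unfolding orth_def by simp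
  finally have "Rn \<phi> d = 0" unfolding Rn_def by simp
  then show ?thesis using Rn_zero_iff[OF phic phipos] unfolding d_def by simp
qed

lemma orth_from_basis:
  assumes B: "\<And>m. m < n \<Longrightarrow> degree (B m) = m \<and> lead_coeff (B m) = 1"
    and P: "\<And>m. m < n \<Longrightarrow> ip_phi \<phi> P (B m) = 0"
  shows "degree q < n \<Longrightarrow> ip_phi \<phi> P q = 0"
proof (induction "degree q" arbitrary: q rule: less_induct)
  case less
  define d where "d = degree q"
  define r where "r = q - smult (lead_coeff q) (B d)"
  have dn: "d < n" using less.prems unfolding d_def .
  have "degree (B d) = d \<and> lead_coeff (B d) = 1" using B dn by blast
  then have Bd: "degree (B d) = d" "coeff (B d) d = 1" by auto
  have "degree (smult (lead_coeff q) (B d)) \<le> d"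
    using degree_smult_le[of "lead_coeff q" "B d"] Bd(1) by simp
  then have "degree r \<le> d" unfolding r_def
    using degree_diff_le[of q d "smult (lead_coeff q) (B d)"] d_def by simp
  moreover have "coeff r d = 0" unfolding r_def using Bd(2) d_def by simp
  ultimately have r: "r = 0 \<or> degree r < d"
  proof -
    assume a: "degree r \<le> d" "coeff r d = 0"
    show ?thesis
    proof (cases "r = 0")
      case False
      then have "degree r \<noteq> d" using a(2) leading_coeff_0_iff by metis
      then show ?thesis using a(1) by simp
    qed simp
  qed
  have "ip_phi \<phi> P r = 0"
  proof (cases "r = 0")
    case True then show ?thesis by (simp add: ip_zero_right[OF phic])
  next
    case False
    then have "degree r < degree q" using r d_def by simp
    moreover have "degree r < n" using calculation less.prems by simp
    ultimately show ?thesis using less.hyps by blast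
  qed
  moreover have "q = smult (lead_coeff q) (B d) + r" unfolding r_def by simp
  ultimately have "ip_phi \<phi> P q = ip_phi \<phi> P (smult (lead_coeff q) (B d)) + ip_phi \<phi> P r"
    using ip_add_right[OF phic] by metis
  also have "\<dots> = cnj (lead_coeff q) * ip_phi \<phi> P (B d)"
    using \<open>ip_phi \<phi> P r = 0\<close> by (simp add: ip_smult_right[OF phic])
  also have "ip_phi \<phi> P (B d) = 0" using P dn by blast
  finally show ?case by simp
qed

lemma orth_exists: "\<exists>P. orth \<phi> n P"
proof (induction n rule: less_induct)
  case (less n)
  define B where "B m = (SOME P. orth \<phi> m P)" for m
  have Oo: "orth \<phi> m (B m)" if "m < n" for m
    using less[OF that] unfolding B_def by (rule someI_ex)
  have Bnz: "B m \<noteq> 0" if "m < n" for m using Oo[OF that] unfolding orth_def by auto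
  have Borth: "ip_phi \<phi> (B m) (B k) = (if m = k then complex_of_real (Rn \<phi> (B k)) else 0)"
    if "m < n" "k < n" for m k
  proof (cases "m = k")
    case True then show ?thesis using ip_self_Rn[OF phic phipos, of "B k"] by simp
  next
    case False
    show ?thesis
    proof (cases "k < m")
      case True then show ?thesis using Oo[OF that(1)] Oo[OF that(2)] False unfolding orth_def by simp
    next
      case False2: False
      then have "m < k" using False by simp
      then have "ip_phi \<phi> (B k) (B m) = 0" using Oo[OF that(1)] Oo[OF that(2)] unfolding orth_def by simp
      then show ?thesis using False by (subst ip_cnj[OF phic]) simp
    qed
  qed
  define c where "c m = ip_phi \<phi> (monom 1 n) (B m) / complex_of_real (Rn \<phi> (B m))" for m
  define P where "P = monom 1 n - (\<Sum>m<n. smult (c m) (B m))"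
  have cP: "coeff P j = (if j = n then 1 else 0)" if "j \<ge> n" for j
  proof -
    have "coeff (B m) j = 0" if "m < n" for m
      using Oo[OF that] \<open>j \<ge> n\<close> that unfolding orth_def by (intro coeff_eq_0) simp
    then show ?thesis unfolding P_def by (simp add: coeff_sum coeff_monom)
  qed
  have degP: "degree P = n"
  proof (rule antisym)
    show "degree P \<le> n" using cP by (intro degree_le) auto
    show "n \<le> degree P" using cP[of n] by (intro le_degree) simp
  qed
  have ipP: "ip_phi \<phi> P (B k) = 0" if "k < n" for k
  proof -
    have "ip_phi \<phi> P (B k) = ip_phi \<phi> (monom 1 n) (B k) - (\<Sum>m<n. c m * ip_phi \<phi> (B m) (B k))"
      unfolding P_def by (simp add: ip_diff_left[OF phic] ip_sum_left[OF phic] ip_smult_left[OF phic])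
    also have "(\<Sum>m<n. c m * ip_phi \<phi> (B m) (B k)) = (\<Sum>m<n. if m = k then c k * complex_of_real (Rn \<phi> (B k)) else 0)"
      using Borth that by (intro sum.cong) auto
    also have "\<dots> = c k * complex_of_real (Rn \<phi> (B k))" using that by simp
    also have "\<dots> = ip_phi \<phi> (monom 1 n) (B k)"
      using Rn_pos[OF phic phipos Bnz[OF that]] unfolding c_def by simp
    finally show ?thesis by simp
  qed
  have "orth \<phi> n P"
    unfolding orth_def
  proof (intro conjI allI impI)
    show "degree P = n" by (rule degP)
    show "lead_coeff P = 1" using degP cP[of n] by simp
    fix q :: "complex poly" assume "degree q < n"
    then show "ip_phi \<phi> P q = 0"
      using orth_from_basis[of n B P q] Oo ipP unfolding orth_def by blast
  qed
  then show ?case by blast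
qed

lemma OPUC_orth: "orth \<phi> n (OPUC \<phi> n)"
proof -
  have "\<exists>!P. orth \<phi> n P" using orth_exists orth_unique by blast
  then have "orth \<phi> n (THE P. orth \<phi> n P)" by (rule theI')
  moreover have "OPUC \<phi> n = (THE P. orth \<phi> n P)" unfolding OPUC_def orth_def by simp
  ultimately show ?thesis by simp
qed

lemma OPUC_degree: "degree (OPUC \<phi> n) = n"
  and OPUC_lead: "lead_coeff (OPUC \<phi> n) = 1"
  and OPUC_ortho: "degree q < n \<Longrightarrow> ip_phi \<phi> (OPUC \<phi> n) q = 0"
  using OPUC_orth[of n] unfolding orth_def by auto

lemma OPUC_nz: "OPUC \<phi> n \<noteq> 0"
proof
  assume "OPUC \<phi> n = 0"
  then have "lead_coeff (OPUC \<phi> n) = 0" by simp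
  with OPUC_lead show False by simp
qed

lemma OPUC_N_pos: "norm_phi \<phi> (OPUC \<phi> n) > 0"
  using Rn_pos[OF phic phipos OPUC_nz, of n] unfolding norm_phi_def Rn_def by simp

end

lemma cis_vderiv: "((\<lambda>\<theta>. cis (t * \<theta>)) has_vector_derivative (\<i> * complex_of_real t * cis (t * \<theta>))) (at \<theta> within S)"
proof -
  have "((\<lambda>\<theta>. cis (t * \<theta>)) has_derivative (\<lambda>s. (t * s) *\<^sub>R (\<i> * cis (t * \<theta>)))) (at \<theta> within S)"
    by (intro has_derivative_cis derivative_intros)
  then show ?thesis unfolding has_vector_derivative_def
    by (simp add: scaleR_conv_of_real algebra_simps)
qed

lemma poly_cis_vderiv:
  "((\<lambda>\<theta>. poly f (cis \<theta>)) has_vector_derivative (\<i> * cis \<theta> * poly (pderiv f) (cis \<theta>))) (at \<theta>)"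
proof -
  have c: "(cis has_vector_derivative (\<i> * cis \<theta>)) (at \<theta>)"
    using cis_vderiv[of 1 \<theta> UNIV] by simp
  from field_vector_diff_chain_at[OF c poly_DERIV[of f "cis \<theta>"]]
  show ?thesis by (simp add: o_def)
qed

lemma cis_int_integral:
  assumes "t \<in> \<int>" "t \<noteq> 0"
  shows "((\<lambda>\<theta>. cis (t * \<theta>)) has_integral 0) {-pi..pi}"
proof -
  define G where "G \<theta> = cis (t * \<theta>) / (\<i> * complex_of_real t)" for \<theta>
  have "(G has_vector_derivative cis (t * x)) (at x within {-pi..pi})" for x
  proof -
    have "(G has_vector_derivative (\<i> * complex_of_real t * cis (t * x)) / (\<i> * complex_of_real t)) (at x within {-pi..pi})"
      unfolding G_def by (intro has_vector_derivative_divide cis_vderiv)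
    then show ?thesis using assms by simp
  qed
  from fundamental_theorem_of_calculus[of "-pi" pi G, OF _ this]
  have "((\<lambda>\<theta>. cis (t * \<theta>)) has_integral (G pi - G (-pi))) {-pi..pi}" by simp
  moreover have "G pi = G (-pi)"
  proof -
    have "cis (t * pi) = cis (- (t * pi)) * cis (2 * pi * t)" by (simp add: Complex.cis_mult algebra_simps)
    also have "cis (2 * pi * t) = 1" using assms(1) by simp
    finally show ?thesis unfolding G_def by simp
  qed
  ultimately show ?thesis by simp
qed

lemma cont_one: "continuous_on {-pi..pi} (\<lambda>_. 1::real)" by simp
lemma pos_one: "\<theta> \<in> {-pi..pi} \<Longrightarrow> (1::real) > 0" by simp

lemma ip1_monom: "ip_phi (\<lambda>_. 1) (monom a i) (monom b k) = (if i = k then a * cnj b else 0)"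
proof -
  have e: "igd (\<lambda>_. 1) (monom a i) (monom b k) = (\<lambda>\<theta>. (a * cnj b) * cis ((real i - real k) * \<theta>))"
    by (auto simp: igd_def fun_eq_iff poly_monom Complex.DeMoivre cis_cnj Complex.cis_mult algebra_simps)
  show ?thesis
  proof (cases "i = k")
    case True
    then show ?thesis unfolding ip_igd e by (simp add: scaleR_conv_of_real)
  next
    case False
    have "real i - real k \<in> \<int>" by simp
    moreover have "real i - real k \<noteq> 0" using False by simp
    ultimately have "((\<lambda>\<theta>. cis ((real i - real k) * \<theta>)) has_integral 0) {-pi..pi}"
      by (rule cis_int_integral)
    then have "integral {-pi..pi} (\<lambda>\<theta>. (a * cnj b) * cis ((real i - real k) * \<theta>)) = 0"
      by (simp add: integral_mult_right integral_unique)
    then show ?thesis using False unfolding ip_igd e by simp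
  qed
qed

lemma parseval:
  assumes "degree f \<le> N" "degree g \<le> N"
  shows "ip_phi (\<lambda>_. 1) f g = (\<Sum>i\<le>N. coeff f i * cnj (coeff g i))"
proof -
  have "ip_phi (\<lambda>_. 1) f g = ip_phi (\<lambda>_. 1) (\<Sum>i\<le>N. monom (coeff f i) i) (\<Sum>k\<le>N. monom (coeff g k) k)"
    using poly_as_sum_of_monoms'[OF assms(1)] poly_as_sum_of_monoms'[OF assms(2)] by simp
  also have "\<dots> = (\<Sum>i\<le>N. \<Sum>k\<le>N. if i = k then coeff f i * cnj (coeff g k) else 0)"
    by (simp add: ip_sum_left[OF cont_one] ip_sum_right[OF cont_one] ip1_monom)
  also have "\<dots> = (\<Sum>i\<le>N. coeff f i * cnj (coeff g i))"
    by (simp add: sum.delta)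
  finally show ?thesis .
qed

lemma zcnj: "z * cnj z = (complex_of_real (cmod z))\<^sup>2"
  by (metis complex_norm_square of_real_power)

lemma Rn1_parseval:
  assumes "degree f \<le> N"
  shows "Rn (\<lambda>_. 1) f = (\<Sum>i\<le>N. (cmod (coeff f i))\<^sup>2)"
proof -
  have "ip_phi (\<lambda>_. 1) f f = (\<Sum>i\<le>N. complex_of_real ((cmod (coeff f i))\<^sup>2))"
    using parseval[OF assms assms] by (simp add: zcnj)
  then show ?thesis unfolding Rn_def by simp
qed

definition Dz :: "complex poly \<Rightarrow> complex poly" where
  "Dz f = pCons 0 (pderiv f)"

lemma degree_Dz: "degree (Dz f) \<le> degree f"
  unfolding Dz_def
proof (cases "pderiv f = 0")
  case False
  then have "degree f \<noteq> 0" using pderiv_eq_0_iff by blast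
  then show "degree (pCons 0 (pderiv f)) \<le> degree f" using False by (simp add: degree_pderiv)
qed simp

lemma coeff_Dz: "coeff (Dz f) i = of_nat i * coeff f i"
  unfolding Dz_def by (cases i) (auto simp: coeff_pderiv)

lemma bernstein1:
  assumes "degree f \<le> N"
  shows "Rn (\<lambda>_. 1) (Dz f) \<le> (real N)\<^sup>2 * Rn (\<lambda>_. 1) f"
proof -
  have "Rn (\<lambda>_. 1) (Dz f) = (\<Sum>i\<le>N. (cmod (coeff (Dz f) i))\<^sup>2)"
    using degree_Dz[of f] assms by (intro Rn1_parseval) simp
  also have "\<dots> = (\<Sum>i\<le>N. (real i)\<^sup>2 * (cmod (coeff f i))\<^sup>2)"
    by (simp add: coeff_Dz norm_mult power_mult_distrib)
  also have "\<dots> \<le> (\<Sum>i\<le>N. (real N)\<^sup>2 * (cmod (coeff f i))\<^sup>2)"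
    by (intro sum_mono mult_right_mono power_mono) auto
  also have "\<dots> = (real N)\<^sup>2 * Rn (\<lambda>_. 1) f"
    using Rn1_parseval[OF assms] by (simp add: sum_distrib_left)
  finally show ?thesis .
qed

lemma Rn_compare:
  assumes phic: "continuous_on {-pi..pi} \<phi>"
    and phipos: "\<And>\<theta>. \<theta> \<in> {-pi..pi} \<Longrightarrow> \<phi> \<theta> > 0"
    and psic: "continuous_on {-pi..pi} \<psi>"
    and psipos: "\<And>\<theta>. \<theta> \<in> {-pi..pi} \<Longrightarrow> \<psi> \<theta> > 0"
    and le: "\<And>\<theta>. \<theta> \<in> {-pi..pi} \<Longrightarrow> \<phi> \<theta> \<le> c * \<psi> \<theta>"
  shows "Rn \<phi> f \<le> c * Rn \<psi> f"
proof -
  have "integral {-pi..pi} (\<lambda>\<theta>. (cmod (poly f (cis \<theta>)))\<^sup>2 * \<phi> \<theta>)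
      \<le> integral {-pi..pi} (\<lambda>\<theta>. c * ((cmod (poly f (cis \<theta>)))\<^sup>2 * \<psi> \<theta>))"
  proof (intro integral_le integrable_continuous_interval continuous_intros phic psic)
    fix x :: real assume "x \<in> {-pi..pi}"
    then have "(cmod (poly f (cis x)))\<^sup>2 * \<phi> x \<le> (cmod (poly f (cis x)))\<^sup>2 * (c * \<psi> x)"
      by (intro mult_left_mono le) auto
    then show "(cmod (poly f (cis x)))\<^sup>2 * \<phi> x \<le> c * ((cmod (poly f (cis x)))\<^sup>2 * \<psi> x)"
      by (simp add: algebra_simps)
  qed
  also have "\<dots> = c * integral {-pi..pi} (\<lambda>\<theta>. (cmod (poly f (cis \<theta>)))\<^sup>2 * \<psi> \<theta>)"
    by simp
  finally have I: "integral {-pi..pi} (\<lambda>\<theta>. (cmod (poly f (cis \<theta>)))\<^sup>2 * \<phi> \<theta>)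
      \<le> c * integral {-pi..pi} (\<lambda>\<theta>. (cmod (poly f (cis \<theta>)))\<^sup>2 * \<psi> \<theta>)" .
  have e1: "Rn \<phi> f = integral {-pi..pi} (\<lambda>\<theta>. (cmod (poly f (cis \<theta>)))\<^sup>2 * \<phi> \<theta>) / (2 * pi)"
    by (rule Rn_eq[OF phic phipos])
  have e2: "Rn \<psi> f = integral {-pi..pi} (\<lambda>\<theta>. (cmod (poly f (cis \<theta>)))\<^sup>2 * \<psi> \<theta>) / (2 * pi)"
    by (rule Rn_eq[OF psic psipos])
  show ?thesis
    unfolding e1 e2
    using divide_right_mono[OF I, of "2*pi"] by simp
qed

context
  fixes \<phi> :: "real \<Rightarrow> real"
  assumes phic: "continuous_on {-pi..pi} \<phi>"
    and phipos: "\<And>\<theta>. \<theta> \<in> {-pi..pi} \<Longrightarrow> \<phi> \<theta> > 0"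
begin

lemma weighted_bernstein:
  "\<exists>B>0. \<forall>f N. degree f \<le> N \<longrightarrow> norm_phi \<phi> (Dz f) \<le> B * real N * norm_phi \<phi> f"
proof -
  obtain a where a: "a \<in> {-pi..pi}" "\<And>y. y \<in> {-pi..pi} \<Longrightarrow> \<phi> a \<le> \<phi> y"
    using continuous_attains_inf[OF compact_Icc _ phic] by auto
  obtain b where b: "b \<in> {-pi..pi}" "\<And>y. y \<in> {-pi..pi} \<Longrightarrow> \<phi> y \<le> \<phi> b"
    using continuous_attains_sup[OF compact_Icc _ phic] by auto
  define m where "m = \<phi> a"
  define M where "M = \<phi> b"
  have m: "m > 0" unfolding m_def using phipos a by auto
  have M: "M > 0" unfolding M_def using phipos b by auto
  define B where "B = sqrt (M / m)"
  have B: "B > 0" unfolding B_def using m M by simp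
  have "norm_phi \<phi> (Dz f) \<le> B * real N * norm_phi \<phi> f" if "degree f \<le> N" for f N
  proof -
    have "Rn \<phi> (Dz f) \<le> M * Rn (\<lambda>_. 1) (Dz f)"
      by (rule Rn_compare[OF phic phipos cont_one pos_one]) (use b in \<open>auto simp: M_def\<close>)
    also have "\<dots> \<le> M * ((real N)\<^sup>2 * Rn (\<lambda>_. 1) f)"
      using bernstein1[OF that] M by simp
    also have "Rn (\<lambda>_. 1) f \<le> (1 / m) * Rn \<phi> f"
    proof (rule Rn_compare[OF cont_one pos_one phic phipos, where c="1/m"])
      fix \<theta> assume "\<theta> \<in> {-pi..pi}"
      then show "1 \<le> 1 / m * \<phi> \<theta>" using a m by (auto simp: m_def field_simps)
    qed
    hence "M * ((real N)\<^sup>2 * Rn (\<lambda>_. 1) f) \<le> M * ((real N)\<^sup>2 * ((1 / m) * Rn \<phi> f))"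
      using M by (intro mult_left_mono) auto
    also have "\<dots> = (B * real N)\<^sup>2 * Rn \<phi> f"
      unfolding B_def using m M by (simp add: power_mult_distrib)
    finally have "Rn \<phi> (Dz f) \<le> (B * real N)\<^sup>2 * Rn \<phi> f" .
    hence "sqrt (Rn \<phi> (Dz f)) \<le> sqrt ((B * real N)\<^sup>2 * Rn \<phi> f)"
      by (rule real_sqrt_le_mono)
    also have "\<dots> = B * real N * sqrt (Rn \<phi> f)"
      using B by (simp add: real_sqrt_mult)
    finally show ?thesis unfolding norm_phi_def Rn_def .
  qed
  then show ?thesis using B by blast
qed

end

lemma poly_Dz: "poly (Dz f) x = x * poly (pderiv f) x"
  unfolding Dz_def by simp

lemma ip_weight_bound:
  assumes phic: "continuous_on {-pi..pi} \<phi>"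
    and phipos: "\<And>\<theta>. \<theta> \<in> {-pi..pi} \<Longrightarrow> \<phi> \<theta> > 0"
    and psic: "continuous_on {-pi..pi} \<psi>"
    and M: "M > 0"
    and le: "\<And>\<theta>. \<theta> \<in> {-pi..pi} \<Longrightarrow> \<bar>\<psi> \<theta>\<bar> \<le> M * \<phi> \<theta>"
  shows "cmod (ip_phi \<psi> f g) \<le> (M\<^sup>2 * Rn \<phi> f + Rn \<phi> g) / 2"
proof -
  define A where "A \<theta> = (cmod (poly f (cis \<theta>)))\<^sup>2 * \<phi> \<theta>" for \<theta>
  define B where "B \<theta> = (cmod (poly g (cis \<theta>)))\<^sup>2 * \<phi> \<theta>" for \<theta>
  have iA: "A integrable_on {-pi..pi}" unfolding A_def
    by (intro integrable_continuous_interval continuous_intros phic)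
  have iB: "B integrable_on {-pi..pi}" unfolding B_def
    by (intro integrable_continuous_interval continuous_intros phic)
  have "cmod (integral {-pi..pi} (igd \<psi> f g)) \<le> integral {-pi..pi} (\<lambda>\<theta>. (M\<^sup>2 * A \<theta> + B \<theta>) / 2)"
  proof (rule integral_norm_bound_integral)
    show "igd \<psi> f g integrable_on {-pi..pi}" by (rule ip_integrable[OF psic])
    show "(\<lambda>\<theta>. (M\<^sup>2 * A \<theta> + B \<theta>) / 2) integrable_on {-pi..pi}"
      unfolding A_def B_def by (intro integrable_continuous_interval continuous_intros phic) auto
    fix x :: real assume x: "x \<in> {-pi..pi}"
    define a where "a = cmod (poly f (cis x))"
    define b where "b = cmod (poly g (cis x))"
    have ab: "a \<ge> 0" "b \<ge> 0" unfolding a_def b_def by auto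
    have "cmod (igd \<psi> f g x) = a * b * \<bar>\<psi> x\<bar>"
      unfolding igd_def a_def b_def by (simp add: norm_mult)
    also have "\<dots> \<le> a * b * (M * \<phi> x)"
      using ab le[OF x] by (intro mult_left_mono) auto
    also have "\<dots> \<le> (M\<^sup>2 * (a\<^sup>2 * \<phi> x) + b\<^sup>2 * \<phi> x) / 2"
    proof -
      have "0 \<le> (M * a - b)\<^sup>2 * \<phi> x" using phipos[OF x] by simp
      then show ?thesis by (simp add: power2_eq_square algebra_simps)
    qed
    finally show "cmod (igd \<psi> f g x) \<le> (M\<^sup>2 * A x + B x) / 2"
      unfolding A_def B_def a_def b_def .
  qed
  also have "\<dots> = (M\<^sup>2 * integral {-pi..pi} A + integral {-pi..pi} B) / 2"
  proof -
    have "integral {-pi..pi} (\<lambda>\<theta>. M\<^sup>2 * A \<theta> + B \<theta>) = M\<^sup>2 * integral {-pi..pi} A + integral {-pi..pi} B"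
      by (rule integral_unique[OF has_integral_add[OF has_integral_mult_right[OF integrable_integral[OF iA]]
            integrable_integral[OF iB]]])
    then show ?thesis by (simp add: integral_divide)
  qed
  finally have I: "cmod (integral {-pi..pi} (igd \<psi> f g)) \<le> (M\<^sup>2 * integral {-pi..pi} A + integral {-pi..pi} B) / 2" .
  have e1: "Rn \<phi> f = integral {-pi..pi} A / (2 * pi)" unfolding A_def by (rule Rn_eq[OF phic phipos])
  have e2: "Rn \<phi> g = integral {-pi..pi} B / (2 * pi)" unfolding B_def by (rule Rn_eq[OF phic phipos])
  have "cmod (ip_phi \<psi> f g) = cmod (integral {-pi..pi} (igd \<psi> f g)) / (2 * pi)"
    unfolding ip_igd by (simp add: norm_divide)
  also have "\<dots> \<le> ((M\<^sup>2 * integral {-pi..pi} A + integral {-pi..pi} B) / 2) / (2 * pi)"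
    using I by (intro divide_right_mono) auto
  also have "\<dots> = (M\<^sup>2 * Rn \<phi> f + Rn \<phi> g) / 2"
    unfolding e1 e2 by (simp add: field_simps)
  finally show ?thesis .
qed

lemma integral_lin2:
  fixes h1 h2 :: "real \<Rightarrow> complex"
  assumes "h1 integrable_on S" "h2 integrable_on S"
  shows "integral S (\<lambda>x. a * h1 x + b * h2 x) = a * integral S h1 + b * integral S h2"
  by (rule integral_unique[OF has_integral_add[OF has_integral_mult_right[OF integrable_integral[OF assms(1)]]
        has_integral_mult_right[OF integrable_integral[OF assms(2)]]]])

context
  fixes V V' :: "real \<Rightarrow> real"
  assumes Vd: "\<And>x. (V has_real_derivative V' x) (at x)"
    and V'c: "continuous_on UNIV V'"
    and Vper: "V (-pi) = V pi"
begin

lemma Vc: "continuous_on S V"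
  by (meson DERIV_isCont Vd continuous_at_imp_continuous_on)

lemma phi_c: "continuous_on S (\<lambda>\<theta>. exp (- V \<theta>))"
  by (intro continuous_intros Vc)

lemma psi_c: "continuous_on S (\<lambda>\<theta>. V' \<theta> * exp (- V \<theta>))"
  by (intro continuous_intros Vc continuous_on_subset[OF V'c]) auto

lemma ibp_identity:
  "\<i> * ip_phi (\<lambda>\<theta>. exp (- V \<theta>)) (Dz f) g =
     \<i> * ip_phi (\<lambda>\<theta>. exp (- V \<theta>)) f (Dz g) + ip_phi (\<lambda>\<theta>. V' \<theta> * exp (- V \<theta>)) f g"
proof -
  define \<phi> where "\<phi> = (\<lambda>\<theta>. exp (- V \<theta>))"
  define \<psi> where "\<psi> = (\<lambda>\<theta>. V' \<theta> * exp (- V \<theta>))"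
  define F where "F \<theta> = poly f (cis \<theta>)" for \<theta>
  define F' where "F' \<theta> = \<i> * poly (Dz f) (cis \<theta>)" for \<theta>
  define G where "G \<theta> = cnj (poly g (cis \<theta>)) * complex_of_real (\<phi> \<theta>)" for \<theta>
  define G' where "G' \<theta> = cnj (\<i> * poly (Dz g) (cis \<theta>)) * complex_of_real (\<phi> \<theta>)
      + cnj (poly g (cis \<theta>)) * complex_of_real (- V' \<theta> * \<phi> \<theta>)" for \<theta>
  have dF: "(F has_vector_derivative F' x) (at x)" for x
    unfolding F_def F'_def poly_Dz using poly_cis_vderiv[of f x] by (simp add: mult.assoc)
  have dphi: "((\<lambda>\<theta>. complex_of_real (\<phi> \<theta>)) has_vector_derivative complex_of_real (- V' x * \<phi> x)) (at x)" for x
    unfolding \<phi>_def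
    by (intro has_vector_derivative_of_real) (auto intro!: derivative_eq_intros Vd)
  have dG: "(G has_vector_derivative G' x) (at x)" for x
  proof -
    have c: "((\<lambda>\<theta>. cnj (poly g (cis \<theta>))) has_vector_derivative cnj (\<i> * poly (Dz g) (cis x))) (at x)"
      using has_vector_derivative_cnj[OF poly_cis_vderiv[of g x]] unfolding poly_Dz by (simp add: mult.assoc)
    show ?thesis unfolding G_def G'_def
      using has_vector_derivative_mult[OF c dphi] by (simp add: algebra_simps)
  qed
  have cF: "continuous_on {-pi..pi} F" unfolding F_def by (intro continuous_intros)
  have cG: "continuous_on {-pi..pi} G" unfolding G_def \<phi>_def
    by (intro continuous_intros continuous_on_of_real phi_c)
  have iFG': "(\<lambda>x. F x * G' x) integrable_on {-pi..pi}" unfolding F_def G'_def \<phi>_def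
    by (intro integrable_continuous_interval continuous_intros continuous_on_of_real phi_c
        continuous_on_subset[OF V'c]) auto
  have bd: "F pi * G pi - F (-pi) * G (-pi) = 0"
  proof -
    have "cis (- pi) = -1" by (simp add: complex_eq_iff)
    then show ?thesis unfolding F_def G_def \<phi>_def using Vper by simp
  qed
  have "((\<lambda>x. F x * G' x) has_integral
          (F pi * G pi - F (-pi) * G (-pi) - (- integral {-pi..pi} (\<lambda>x. F x * G' x)))) {-pi..pi}"
    using integrable_integral[OF iFG'] bd by simp
  from integration_by_parts[OF bounded_bilinear_mult _ cF cG, of F' G', OF _ _ _ this]
  have "((\<lambda>x. F' x * G x) has_integral (- integral {-pi..pi} (\<lambda>x. F x * G' x))) {-pi..pi}"
    using dF dG by (auto intro: has_vector_derivative_at_within)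
  hence eq: "integral {-pi..pi} (\<lambda>x. F' x * G x) = - integral {-pi..pi} (\<lambda>x. F x * G' x)"
    by (rule integral_unique)
  have e1: "(\<lambda>x. F' x * G x) = (\<lambda>x. \<i> * igd \<phi> (Dz f) g x)"
    unfolding F'_def G_def igd_def by (auto simp: fun_eq_iff)
  have e2: "(\<lambda>x. F x * G' x) = (\<lambda>x. (- \<i>) * igd \<phi> f (Dz g) x + (- 1) * igd \<psi> f g x)"
    unfolding F_def G'_def igd_def \<psi>_def \<phi>_def by (auto simp: fun_eq_iff algebra_simps)
  have i1: "igd \<phi> f (Dz g) integrable_on {-pi..pi}" unfolding \<phi>_def by (intro ip_integrable phi_c)
  have i2: "igd \<psi> f g integrable_on {-pi..pi}" unfolding \<psi>_def by (intro ip_integrable psi_c)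
  have "\<i> * integral {-pi..pi} (igd \<phi> (Dz f) g) =
        \<i> * integral {-pi..pi} (igd \<phi> f (Dz g)) + integral {-pi..pi} (igd \<psi> f g)"
    using eq unfolding e1 e2 integral_lin2[OF i1 i2] by simp
  hence "\<i> * integral {-pi..pi} (igd \<phi> (Dz f) g) / (2 * pi) =
        \<i> * integral {-pi..pi} (igd \<phi> f (Dz g)) / (2 * pi) + integral {-pi..pi} (igd \<psi> f g) / (2 * pi)"
    by (simp add: add_divide_distrib)
  then show ?thesis unfolding ip_igd \<phi>_def \<psi>_def by simp
qed

lemma phi_pos: "exp (- V \<theta>) > 0" by simp

lemma q_bound:
  assumes M: "M > 0" and VM: "\<And>\<theta>. \<theta> \<in> {-pi..pi} \<Longrightarrow> \<bar>V' \<theta>\<bar> \<le> M"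
  shows "Rn (\<lambda>\<theta>. exp (- V \<theta>)) (Dz (OPUC (\<lambda>\<theta>. exp (- V \<theta>)) n) - smult (of_nat n) (OPUC (\<lambda>\<theta>. exp (- V \<theta>)) n))
    \<le> M\<^sup>2 * Rn (\<lambda>\<theta>. exp (- V \<theta>)) (OPUC (\<lambda>\<theta>. exp (- V \<theta>)) n)"
proof -
  define \<phi> where "\<phi> = (\<lambda>\<theta>. exp (- V \<theta>))"
  define \<psi> where "\<psi> = (\<lambda>\<theta>. V' \<theta> * exp (- V \<theta>))"
  define P where "P = OPUC \<phi> n"
  define q where "q = Dz P - smult (of_nat n) P"
  have phic: "continuous_on {-pi..pi} \<phi>" unfolding \<phi>_def by (rule phi_c)
  have phip: "\<And>\<theta>. \<theta> \<in> {-pi..pi} \<Longrightarrow> \<phi> \<theta> > 0" unfolding \<phi>_def by simp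
  have degP: "degree P = n" and leadP: "coeff P n = 1"
    using OPUC_degree[OF phic phip, of n] OPUC_lead[OF phic phip, of n] unfolding P_def by auto
  have ortho: "\<And>r. degree r < n \<Longrightarrow> ip_phi \<phi> P r = 0"
    using OPUC_ortho[OF phic phip] unfolding P_def by blast
  show ?thesis
  proof (cases "n = 0")
    case True
    then have "P = [:1:]" using degP leadP by (metis degree_0_id)
    then have "q = 0" unfolding q_def Dz_def using True by simp
    then show ?thesis using Rn_nonneg[OF phic phip, of P] unfolding q_def P_def \<phi>_def
      by (simp add: Rn_def ip_zero_left[OF phi_c])
  next
    case False
    have "degree q \<le> n" unfolding q_def
      using degree_diff_le[of "Dz P" n "smult (of_nat n) P"] degree_Dz[of P] degree_smult_le[of "of_nat n" P] degP
      by simp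
    moreover have "coeff q n = 0" unfolding q_def using leadP by (simp add: coeff_Dz)
    ultimately have dq: "degree q < n" using False degree_lt_aux by auto
    have dDq: "degree (Dz q) < n" using degree_Dz[of q] dq by simp
    have "ip_phi \<phi> q q = ip_phi \<phi> (Dz P - smult (of_nat n) P) q" by (simp only: q_def)
    also have "\<dots> = ip_phi \<phi> (Dz P) q - of_nat n * ip_phi \<phi> P q"
      by (simp add: ip_diff_left[OF phic] ip_smult_left[OF phic])
    also have "\<dots> = ip_phi \<phi> (Dz P) q" using ortho[OF dq] by simp
    finally have e: "ip_phi \<phi> q q = ip_phi \<phi> (Dz P) q" .
    have "\<i> * ip_phi \<phi> (Dz P) q = \<i> * ip_phi \<phi> P (Dz q) + ip_phi \<psi> P q"
      unfolding \<phi>_def \<psi>_def by (rule ibp_identity)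
    hence "\<i> * ip_phi \<phi> q q = ip_phi \<psi> P q" using ortho[OF dDq] e by simp
    hence "cmod (ip_phi \<phi> q q) = cmod (ip_phi \<psi> P q)"
      by (metis mult_1 norm_ii norm_mult)
    also have "\<dots> \<le> (M\<^sup>2 * Rn \<phi> P + Rn \<phi> q) / 2"
    proof (rule ip_weight_bound[OF phic phip _ M])
      show "continuous_on {-pi..pi} \<psi>" unfolding \<psi>_def by (rule psi_c)
      fix \<theta> :: real assume "\<theta> \<in> {-pi..pi}"
      then show "\<bar>\<psi> \<theta>\<bar> \<le> M * \<phi> \<theta>" unfolding \<psi>_def \<phi>_def
        using VM by (simp add: abs_mult)
    qed
    finally have "Rn \<phi> q \<le> (M\<^sup>2 * Rn \<phi> P + Rn \<phi> q) / 2"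
      using ip_self_Rn[OF phic phip, of q] Rn_nonneg[OF phic phip, of q] by simp
    then show ?thesis unfolding q_def P_def \<phi>_def by simp
  qed
qed

end

lemma Dz_add: "Dz (a + b) = Dz a + Dz b"
  by (simp add: Dz_def pderiv_add)
lemma Dz_diff: "Dz (a - b) = Dz a - Dz b"
  by (simp add: Dz_def pderiv_diff)
lemma Dz_smult: "Dz (smult c a) = smult c (Dz a)"
  by (simp add: Dz_def pderiv_smult)

lemma Dz_monom_mult:
  "Dz (monom 1 j * g) = smult (of_nat j) (monom 1 j * g) + monom 1 (Suc j) * pderiv g"
proof -
  have "poly (Dz (monom 1 j * g)) x = poly (smult (of_nat j) (monom 1 j * g) + monom 1 (Suc j) * pderiv g) x" for x
    by (cases j) (auto simp: poly_Dz pderiv_mult pderiv_monom poly_monom algebra_simps)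
  then have "poly (Dz (monom 1 j * g)) = poly (smult (of_nat j) (monom 1 j * g) + monom 1 (Suc j) * pderiv g)"
    by (rule ext)
  then show ?thesis using poly_eq_poly_eq_iff by blast
qed

lemma N_monom_mult:
  assumes phic: "continuous_on {-pi..pi} \<phi>"
    and phipos: "\<And>\<theta>. \<theta> \<in> {-pi..pi} \<Longrightarrow> \<phi> \<theta> > 0"
  shows "norm_phi \<phi> (monom 1 j * g) = norm_phi \<phi> g"
proof -
  have "Rn \<phi> (monom 1 j * g) = Rn \<phi> g"
    using Rn_eq[OF phic phipos, of "monom 1 j * g"] Rn_eq[OF phic phipos, of g]
    by (simp add: poly_monom norm_mult norm_power)
  then show ?thesis unfolding norm_phi_def Rn_def by simp
qed

lemma N_zero: "norm_phi \<phi> 0 = 0"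
  unfolding norm_phi_def ip_phi_def by simp

lemma limit_aux:
  fixes a b :: "nat \<Rightarrow> real"
  assumes "b \<longlonglongrightarrow> 1" and "\<And>n. n \<ge> 1 \<Longrightarrow> \<bar>a n - b n\<bar> \<le> K / real n"
  shows "a \<longlonglongrightarrow> 1"
proof -
  have "(\<lambda>n. a n - b n) \<longlonglongrightarrow> 0"
  proof (rule Lim_null_comparison)
    show "\<forall>\<^sub>F n in sequentially. norm (a n - b n) \<le> K / real n"
      unfolding eventually_sequentially using assms(2) by auto
    show "(\<lambda>n. K / real n) \<longlonglongrightarrow> 0" by (rule tendsto_divide_0[OF tendsto_const]) (rule filterlim_at_top_imp_at_infinity[OF filterlim_real_sequentially])
  qed
  from tendsto_add[OF assms(1) this] show ?thesis by simp
qed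

lemma cprod_limit: "(\<lambda>n. \<bar>(\<Prod>i<p. real n - real i)\<bar> / real n ^ p) \<longlonglongrightarrow> 1"
proof -
  have "(\<lambda>n. (\<Prod>i<p. 1 - real i / real n)) \<longlonglongrightarrow> (\<Prod>i<p. 1 - 0)"
    by (intro tendsto_prod tendsto_diff tendsto_const tendsto_divide_0[OF tendsto_const] filterlim_at_top_imp_at_infinity[OF filterlim_real_sequentially])
  hence "(\<lambda>n. \<bar>\<Prod>i<p. 1 - real i / real n\<bar>) \<longlonglongrightarrow> 1" using tendsto_rabs by fastforce
  moreover have "\<forall>\<^sub>F n in sequentially. \<bar>\<Prod>i<p. 1 - real i / real n\<bar> = \<bar>(\<Prod>i<p. real n - real i)\<bar> / real n ^ p"
    using eventually_ge_at_top[of 1]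
  proof (rule eventually_mono)
    fix n :: nat assume n: "n \<ge> 1"
    have "(\<Prod>i<p. 1 - real i / real n) = (\<Prod>i<p. (real n - real i) / real n)"
      using n by (intro prod.cong) (auto simp: field_simps)
    also have "\<dots> = (\<Prod>i<p. real n - real i) / real n ^ p"
      by (simp add: prod_dividef)
    finally show "\<bar>\<Prod>i<p. 1 - real i / real n\<bar> = \<bar>(\<Prod>i<p. real n - real i)\<bar> / real n ^ p"
      by (simp add: abs_divide)
  qed
  ultimately show ?thesis using Lim_transform_eventually by fastforce
qed

lemma cprod_bound:
  assumes "n \<ge> 1"
  shows "\<bar>\<Prod>i<j. real n - real i\<bar> \<le> ((1 + real j) * real n) ^ j"
proof -
  have "\<bar>\<Prod>i<j. real n - real i\<bar> = (\<Prod>i<j. \<bar>real n - real i\<bar>)" by (simp add: abs_prod)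
  also have "\<dots> \<le> (\<Prod>i<j. (1 + real j) * real n)"
  proof (rule prod_mono)
    fix i assume "i \<in> {..<j}"
    then have "\<bar>real n - real i\<bar> \<le> real n + real j" by auto
    also have "\<dots> \<le> (1 + real j) * real n"
    proof -
      have "real j * 1 \<le> real j * real n" using assms by (intro mult_left_mono) auto
      then show ?thesis by (simp add: algebra_simps)
    qed
    finally show "0 \<le> \<bar>real n - real i\<bar> \<and> \<bar>real n - real i\<bar> \<le> (1 + real j) * real n" by simp
  qed
  finally show ?thesis by simp
qed

context
  fixes V V' :: "real \<Rightarrow> real"
  assumes Vd: "\<And>x. (V has_real_derivative V' x) (at x)"
    and V'c: "continuous_on UNIV V'"
    and Vper: "V (-pi) = V pi"
begin

lemma main_limit:
  "(\<lambda>n. (1 / real n ^ p) *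
            (norm_phi (\<lambda>\<theta>. exp (- V \<theta>)) ((pderiv ^^ p) (OPUC (\<lambda>\<theta>. exp (- V \<theta>)) n))
             / norm_phi (\<lambda>\<theta>. exp (- V \<theta>)) (OPUC (\<lambda>\<theta>. exp (- V \<theta>)) n)))
         \<longlonglongrightarrow> 1"
proof -
  define \<phi> where "\<phi> = (\<lambda>\<theta>. exp (- V \<theta>))"
  have phic: "continuous_on {-pi..pi} \<phi>" unfolding \<phi>_def by (rule phi_c[OF Vd V'c Vper])
  have phip: "\<And>\<theta>. \<theta> \<in> {-pi..pi} \<Longrightarrow> \<phi> \<theta> > 0" unfolding \<phi>_def by simp
  let ?N = "norm_phi \<phi>"
  have Nsm: "\<And>c f. ?N (smult c f) = cmod c * ?N f" by (rule N_smult[OF phic phip])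
  obtain B where B: "B > 0" "\<And>f N. degree f \<le> N \<Longrightarrow> ?N (Dz f) \<le> B * real N * ?N f"
    using weighted_bernstein[OF phic phip] by blast
  obtain t where t: "t \<in> {-pi..pi}" "\<And>y. y \<in> {-pi..pi} \<Longrightarrow> \<bar>V' y\<bar> \<le> \<bar>V' t\<bar>"
  proof -
    have ne: "{-pi..pi} \<noteq> {}" by simp
    have "continuous_on {-pi..pi} (\<lambda>y. \<bar>V' y\<bar>)"
      by (intro continuous_on_rabs continuous_on_subset[OF V'c]) auto
    from continuous_attains_sup[OF compact_Icc ne this] show ?thesis using that by blast
  qed
  define M where "M = \<bar>V' t\<bar> + 1"
  have M: "M > 0" "\<And>y. y \<in> {-pi..pi} \<Longrightarrow> \<bar>V' y\<bar> \<le> M"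
  proof -
    show "M > 0" unfolding M_def by simp
    fix y :: real assume "y \<in> {-pi..pi}"
    then show "\<bar>V' y\<bar> \<le> M" using t(2)[of y] unfolding M_def by simp
  qed
  define P where "P n = OPUC \<phi> n" for n
  define Q where "Q n j = monom 1 j * (pderiv ^^ j) (P n)" for n j
  define c where "c n j = (\<Prod>i<j. real n - real i)" for n j
  define r where "r n j = Q n j - smult (complex_of_real (c n j)) (P n)" for n j
  define qq where "qq n = Dz (P n) - smult (of_nat n) (P n)" for n
  have NP: "?N (P n) > 0" for n unfolding P_def by (rule OPUC_N_pos[OF phic phip])
  have degP: "degree (P n) = n" for n unfolding P_def by (rule OPUC_degree[OF phic phip])
  have Nq: "?N (qq n) \<le> M * ?N (P n)" for n
  proof -
    have "Rn \<phi> (qq n) \<le> M\<^sup>2 * Rn \<phi> (P n)"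
      unfolding qq_def P_def \<phi>_def by (rule q_bound[OF Vd V'c Vper M])
    hence "sqrt (Rn \<phi> (qq n)) \<le> sqrt (M\<^sup>2 * Rn \<phi> (P n))" by (rule real_sqrt_le_mono)
    also have "\<dots> = M * sqrt (Rn \<phi> (P n))" using M by (simp add: real_sqrt_mult)
    finally show ?thesis unfolding norm_phi_def Rn_def .
  qed
  have Qrec: "Q n (Suc j) = Dz (Q n j) - smult (of_nat j) (Q n j)" for n j
    unfolding Q_def Dz_monom_mult by simp
  have degQ: "degree (Q n j) \<le> n" for n j
  proof (induction j)
    case 0 then show ?case unfolding Q_def using degP by simp
  next
    case (Suc j)
    have "degree (Dz (Q n j)) \<le> n" using degree_Dz[of "Q n j"] Suc by simp
    moreover have "degree (smult (of_nat j) (Q n j)) \<le> n" using degree_smult_le Suc order_trans by blast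
    ultimately show ?case unfolding Qrec using degree_diff_le by blast
  qed
  have degr: "degree (r n j) \<le> n" for n j
  proof -
    have "degree (smult (complex_of_real (c n j)) (P n)) \<le> n" using degree_smult_le degP by (metis)
    then show ?thesis unfolding r_def using degQ degree_diff_le by blast
  qed
  have crec: "c n (Suc j) = c n j * (real n - real j)" for n j
    unfolding c_def by simp
  have rrec: "r n (Suc j) = smult (complex_of_real (c n j)) (qq n) + Dz (r n j) - smult (of_nat j) (r n j)" for n j
    unfolding r_def Qrec crec qq_def Dz_diff Dz_smult
    by (simp add: smult_diff_right smult_diff_left smult_add_right algebra_simps)
  have claim: "\<exists>K\<ge>0. \<forall>n\<ge>1. ?N (r n j) * real n \<le> K * real n ^ j * ?N (P n)" for j
  proof (induction j)
    case 0
    have "r n 0 = 0" for n unfolding r_def Q_def c_def by simp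
    then show ?case by (auto simp: N_zero)
  next
    case (Suc j)
    then obtain K where K: "K \<ge> 0" "\<And>n. n \<ge> 1 \<Longrightarrow> ?N (r n j) * real n \<le> K * real n ^ j * ?N (P n)"
      by blast
    define K' where "K' = (1 + real j) ^ j * M + (B + real j) * K"
    have K': "K' \<ge> 0" unfolding K'_def using K M B by simp
    have "?N (r n (Suc j)) * real n \<le> K' * real n ^ Suc j * ?N (P n)" if n: "n \<ge> 1" for n
    proof -
      have "?N (r n (Suc j)) \<le> ?N (smult (complex_of_real (c n j)) (qq n) + Dz (r n j)) + ?N (smult (of_nat j) (r n j))"
        unfolding rrec by (rule N_diff[OF phic phip])
      also have "\<dots> \<le> ?N (smult (complex_of_real (c n j)) (qq n)) + ?N (Dz (r n j)) + ?N (smult (of_nat j) (r n j))"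
        using N_triangle[OF phic phip] by simp
      also have "\<dots> = \<bar>c n j\<bar> * ?N (qq n) + ?N (Dz (r n j)) + real j * ?N (r n j)"
        by (simp add: Nsm)
      also have "\<dots> \<le> ((1 + real j) * real n) ^ j * (M * ?N (P n)) + B * real n * ?N (r n j) + real j * ?N (r n j)"
      proof (intro add_mono order_refl mult_mono)
        show "\<bar>c n j\<bar> \<le> ((1 + real j) * real n) ^ j" unfolding c_def by (rule cprod_bound[OF n])
        show "?N (qq n) \<le> M * ?N (P n)" by (rule Nq)
        show "?N (Dz (r n j)) \<le> B * real n * ?N (r n j)" by (rule B(2)[OF degr])
      qed (use N_nonneg[OF phic phip] M in auto)
      finally have a: "?N (r n (Suc j)) \<le> ((1 + real j) * real n) ^ j * (M * ?N (P n)) + (B * real n + real j) * ?N (r n j)"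
        by (simp add: algebra_simps)
      have "?N (r n (Suc j)) * real n \<le> (((1 + real j) * real n) ^ j * (M * ?N (P n)) + (B * real n + real j) * ?N (r n j)) * real n"
        using a n by (intro mult_right_mono) auto
      also have "\<dots> = (1 + real j) ^ j * M * real n ^ Suc j * ?N (P n) + (B * real n + real j) * (?N (r n j) * real n)"
        unfolding power_mult_distrib by (simp add: algebra_simps)
      also have "\<dots> \<le> (1 + real j) ^ j * M * real n ^ Suc j * ?N (P n) + ((B + real j) * real n) * (K * real n ^ j * ?N (P n))"
      proof (rule add_mono[OF order_refl])
        have "real j * 1 \<le> real j * real n" using n by (intro mult_left_mono) auto
        then have h1: "B * real n + real j \<le> (B + real j) * real n" by (simp add: algebra_simps)
        show "(B * real n + real j) * (?N (r n j) * real n) \<le> ((B + real j) * real n) * (K * real n ^ j * ?N (P n))"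
          by (rule mult_mono[OF h1 K(2)[OF n]]) (use B N_nonneg[OF phic phip] in auto)
      qed
      also have "\<dots> = K' * real n ^ Suc j * ?N (P n)"
        unfolding K'_def by (simp add: algebra_simps)
      finally show ?thesis .
    qed
    then show ?case using K' by blast
  qed
  obtain K where K: "K \<ge> 0" "\<And>n. n \<ge> 1 \<Longrightarrow> ?N (r n p) * real n \<le> K * real n ^ p * ?N (P n)"
    using claim[of p] by blast
  define a where "a n = (1 / real n ^ p) * (?N ((pderiv ^^ p) (P n)) / ?N (P n))" for n
  define b where "b n = \<bar>c n p\<bar> / real n ^ p" for n
  have "a \<longlonglongrightarrow> 1"
  proof (rule limit_aux)
    show "b \<longlonglongrightarrow> 1" unfolding b_def c_def by (rule cprod_limit)
    fix n :: nat assume n: "n \<ge> 1"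
    have NQ: "?N (Q n p) = ?N ((pderiv ^^ p) (P n))" unfolding Q_def by (rule N_monom_mult[OF phic phip])
    have "\<bar>?N (Q n p) - \<bar>c n p\<bar> * ?N (P n)\<bar> \<le> ?N (r n p)"
      using N_rev[OF phic phip, of "Q n p" "smult (complex_of_real (c n p)) (P n)"]
      unfolding r_def by (simp add: Nsm)
    hence "\<bar>?N (Q n p) - \<bar>c n p\<bar> * ?N (P n)\<bar> * real n \<le> K * real n ^ p * ?N (P n)"
      using K(2)[OF n] n by (meson mult_right_mono of_nat_0_le_iff order_trans)
    moreover have "a n - b n = (?N (Q n p) - \<bar>c n p\<bar> * ?N (P n)) / (real n ^ p * ?N (P n))"
      unfolding a_def b_def NQ using NP[of n] n by (simp add: field_simps)
    ultimately have "\<bar>a n - b n\<bar> * (real n ^ p * ?N (P n)) * real n \<le> K * real n ^ p * ?N (P n)"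
      using NP[of n] n by (simp add: abs_divide abs_mult)
    hence "\<bar>a n - b n\<bar> * real n * (real n ^ p * ?N (P n)) \<le> K * (real n ^ p * ?N (P n))"
      by (simp add: algebra_simps)
    hence "\<bar>a n - b n\<bar> * real n \<le> K"
      using NP[of n] n by (simp add: mult_le_cancel_right)
    then show "\<bar>a n - b n\<bar> \<le> K / real n" using n by (simp add: field_simps)
  qed
  then show ?thesis unfolding a_def P_def \<phi>_def by simp
qed

end

lemma C_lip_cont:
  assumes "C_lip_periodic k V" "k \<ge> 1"
  shows "continuous_on UNIV V"
proof -
  obtain D :: "nat \<Rightarrow> real \<Rightarrow> real" where D0: "D 0 = V"
    and Dd: "\<forall>j < k - 1. \<forall>x. (D j has_real_derivative D (Suc j) x) (at x)"
    and L: "\<exists>L. \<forall>x y. \<bar>D (k - 1) x - D (k - 1) y\<bar> \<le> L * \<bar>x - y\<bar>"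
    using assms(1) unfolding C_lip_periodic_def by blast
  show ?thesis
  proof (cases "k - 1 = 0")
    case True
    obtain L where L: "\<And>x y. \<bar>V x - V y\<bar> \<le> L * \<bar>x - y\<bar>" using L True D0 by auto
    have "lipschitz_on \<bar>L\<bar> UNIV V"
      unfolding lipschitz_on_def dist_real_def
    proof (intro conjI ballI)
      fix x y :: real
      have "L * \<bar>x - y\<bar> \<le> \<bar>L\<bar> * \<bar>x - y\<bar>" by (intro mult_right_mono) auto
      then show "\<bar>V x - V y\<bar> \<le> \<bar>L\<bar> * \<bar>x - y\<bar>" using L[of x y] by linarith
    qed simp
    then show ?thesis by (rule lipschitz_on_continuous_on)
  next
    case False
    then have "\<And>x. (V has_real_derivative D 1 x) (at x)" using Dd D0 by auto
    then show ?thesis by (meson DERIV_isCont continuous_at_imp_continuous_on)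
  qed
qed

theorem corollary3p3:
  fixes p k :: nat and V :: "real \<Rightarrow> real"
  assumes "C_lip_periodic k V"
    and "k \<ge> 2 * p + 1"
  shows "(\<lambda>n. (1 / real n ^ p) *
            (norm_phi (\<lambda>\<theta>. exp (- V \<theta>)) ((pderiv ^^ p) (OPUC (\<lambda>\<theta>. exp (- V \<theta>)) n))
             / norm_phi (\<lambda>\<theta>. exp (- V \<theta>)) (OPUC (\<lambda>\<theta>. exp (- V \<theta>)) n)))
         \<longlonglongrightarrow> 1"
proof (cases "p = 0")
  case True
  have Vc: "continuous_on UNIV V" using C_lip_cont[OF assms(1)] assms(2) by simp
  have phic: "continuous_on {-pi..pi} (\<lambda>\<theta>. exp (- V \<theta>))"
    by (intro continuous_intros continuous_on_subset[OF Vc]) auto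
  have phip: "\<And>\<theta>. \<theta> \<in> {-pi..pi} \<Longrightarrow> exp (- V \<theta>) > 0" by simp
  have "norm_phi (\<lambda>\<theta>. exp (- V \<theta>)) (OPUC (\<lambda>\<theta>. exp (- V \<theta>)) n) > 0" for n
    by (rule OPUC_N_pos[OF phic phip])
  then have "norm_phi (\<lambda>\<theta>. exp (- V \<theta>)) (OPUC (\<lambda>\<theta>. exp (- V \<theta>)) n) \<noteq> 0" for n
    by (metis less_irrefl)
  then show ?thesis using True by simp
next
  case False
  obtain D :: "nat \<Rightarrow> real \<Rightarrow> real" where D0: "D 0 = V"
    and Dd: "\<forall>j < k - 1. \<forall>x. (D j has_real_derivative D (Suc j) x) (at x)"
    and per: "\<forall>\<theta>. V (\<theta> + 2 * pi) = V \<theta>"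
    using assms(1) unfolding C_lip_periodic_def by blast
  have k: "1 < k - 1" using False assms(2) by simp
  have Vd: "\<And>x. (V has_real_derivative D 1 x) (at x)" using Dd D0 k by auto
  have D1d: "\<And>x. (D 1 has_real_derivative D 2 x) (at x)" using Dd k
    by (metis numeral_2_eq_2 One_nat_def)
  have V'c: "continuous_on UNIV (D 1)"
    using D1d by (meson DERIV_isCont continuous_at_imp_continuous_on)
  have Vper: "V (-pi) = V pi" using per[rule_format, of "-pi"] by simp
  show ?thesis by (rule main_limit[OF Vd V'c Vper])
qed

end
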